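(* Let $e,f\in\mathsf{Exp}/{\sim}$ and $v_x\in V$. For all $n\in\mathbb{N}$, if $e\sim^{(n)}f$ then $\mu v_x.e\sim^{(n)}\mu v_x.f$.
   Context: Fix variables $V=\{v_1,v_2,\dots\}$ and letters $\Sigma$. Expressions: $e\in\mathsf{Exp}::=0\mid v\ (v\in V)\mid a.e\mid e+f\mid\mu v.e$ ($\mu v$ binds $v$); $e[\vec f/\vec v]$ is simultaneous capture-avoiding substitution. The prechart $(\mathsf{Exp},\partial)$: least relations with $a.e\xrightarrow{a}e$; $v\rhd v$; $e+f$ has all transitions and outputs of $e$ and of $f$; $\mu w.e\rhd v$ if $e\rhd v$, $v\ne w$; $\mu v.e\xrightarrow{a}e'[\mu v.e/v]$ if $e\xrightarrow{a}e'$. Bisimilarity $\sim$ is a congruence for all operations including substitution; $\mathsf{Exp}/{\sim}$ is a prechart via $[e]\xrightarrow{a}[e']$ iff $e\xrightarrow{a}e'$, $[e]\rhd v$ iff $e\rhd v$. Stratified bisimilarity on it: $x\sim^{(0)}y$ always; $x\sim^{(k+1)}y$ iff $x,y$ have the same outputs, every $x\xrightarrow{a}x'$ is matched by some $y\xrightarrow{a}y'$ with $x'\sim^{(k)}y'$, and symmetrically. *)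

theory Defs
  imports Main
begin

datatype 'a exp = Zero | Var nat | Pre 'a "'a exp" | Plus "'a exp" "'a exp" | Mu nat "'a exp"

fun fv :: "'a exp \<Rightarrow> nat set" where
  "fv Zero = {}"
| "fv (Var v) = {v}"
| "fv (Pre a e) = fv e"
| "fv (Plus e f) = fv e \<union> fv f"
| "fv (Mu v e) = fv e - {v}"

lemma finite_fv[simp]: "finite (fv e)"
  by (induction e) auto

definition fresh_for :: "nat \<Rightarrow> nat set \<Rightarrow> nat" where
  "fresh_for w A = (if w \<notin> A then w else Suc (Max A))"

fun ssubst :: "(nat \<Rightarrow> 'a exp) \<Rightarrow> 'a exp \<Rightarrow> 'a exp" where
  "ssubst \<sigma> Zero = Zero"
| "ssubst \<sigma> (Var v) = \<sigma> v"
| "ssubst \<sigma> (Pre a e) = Pre a (ssubst \<sigma> e)"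
| "ssubst \<sigma> (Plus e f) = Plus (ssubst \<sigma> e) (ssubst \<sigma> f)"
| "ssubst \<sigma> (Mu w e) =
     (let w' = fresh_for w (\<Union>u\<in>fv (Mu w e). fv (\<sigma> u))
      in Mu w' (ssubst (\<sigma>(w := Var w')) e))"

definition subst1 :: "'a exp \<Rightarrow> 'a exp \<Rightarrow> nat \<Rightarrow> 'a exp" where
  "subst1 e g v = ssubst (Var(v := g)) e"

inductive out :: "'a exp \<Rightarrow> nat \<Rightarrow> bool" where
  out_var: "out (Var v) v"
| out_plusL: "out e v \<Longrightarrow> out (Plus e f) v"
| out_plusR: "out f v \<Longrightarrow> out (Plus e f) v"
| out_mu: "out e v \<Longrightarrow> v \<noteq> w \<Longrightarrow> out (Mu w e) v"

inductive step :: "'a exp \<Rightarrow> 'a \<Rightarrow> 'a exp \<Rightarrow> bool" where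
  step_pre: "step (Pre a e) a e"
| step_plusL: "step e a e' \<Longrightarrow> step (Plus e f) a e'"
| step_plusR: "step f a f' \<Longrightarrow> step (Plus e f) a f'"
| step_mu: "step e a e' \<Longrightarrow> step (Mu v e) a (subst1 e' (Mu v e) v)"

definition is_bisim :: "('a exp \<Rightarrow> 'a exp \<Rightarrow> bool) \<Rightarrow> bool" where
  "is_bisim R \<longleftrightarrow> (\<forall>e f. R e f \<longrightarrow>
      (\<forall>v. out e v \<longleftrightarrow> out f v)
    \<and> (\<forall>a e'. step e a e' \<longrightarrow> (\<exists>f'. step f a f' \<and> R e' f'))
    \<and> (\<forall>a f'. step f a f' \<longrightarrow> (\<exists>e'. step e a e' \<and> R e' f')))"

definition bisim :: "'a exp \<Rightarrow> 'a exp \<Rightarrow> bool" where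
  "bisim e f \<longleftrightarrow> (\<exists>R. is_bisim R \<and> R e f)"

text \<open>The quotient Exp/~ : bisimilarity classes, as sets of expressions.\<close>
definition bisim_rel :: "('a exp \<times> 'a exp) set" where
  "bisim_rel = {(e, f). bisim e f}"

definition ExpQ :: "'a exp set set" where
  "ExpQ = UNIV // bisim_rel"

definition qstep :: "'a exp set \<Rightarrow> 'a \<Rightarrow> 'a exp set \<Rightarrow> bool" where
  "qstep X a Y \<longleftrightarrow> (\<exists>e\<in>X. \<exists>e'\<in>Y. step e a e')"

definition qout :: "'a exp set \<Rightarrow> nat \<Rightarrow> bool" where
  "qout X v \<longleftrightarrow> (\<exists>e\<in>X. out e v)"

text \<open>mu v on Exp/~ : mu v.[e] = [mu v.e].\<close>
definition qmu :: "nat \<Rightarrow> 'a exp set \<Rightarrow> 'a exp set" where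
  "qmu v X = {g. \<exists>e\<in>X. bisim g (Mu v e)}"

fun qstrat :: "nat \<Rightarrow> 'a exp set \<Rightarrow> 'a exp set \<Rightarrow> bool" where
  "qstrat 0 X Y = True"
| "qstrat (Suc k) X Y =
     ((\<forall>v. qout X v \<longleftrightarrow> qout Y v)
    \<and> (\<forall>a X'. X' \<in> ExpQ \<longrightarrow> qstep X a X' \<longrightarrow> (\<exists>Y'\<in>ExpQ. qstep Y a Y' \<and> qstrat k X' Y'))
    \<and> (\<forall>a Y'. Y' \<in> ExpQ \<longrightarrow> qstep Y a Y' \<longrightarrow> (\<exists>X'\<in>ExpQ. qstep X a X' \<and> qstrat k X' Y')))"

end

theory Submission
  imports Defs
begin

lemma fresh_for_notin: "finite A \<Longrightarrow> fresh_for w A \<notin> A"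
proof
  assume fin: "finite A" and h: "fresh_for w A \<in> A"
  show False
  proof (cases "w \<in> A")
    case True
    then have "Suc (Max A) \<in> A" using h unfolding fresh_for_def by simp
    then have "Suc (Max A) \<le> Max A" using Max_ge[OF fin] by blast
    then show False by simp
  next
    case False
    then show False using h unfolding fresh_for_def by simp
  qed
qed

lemma ssubst_cong: "(\<And>u. u \<in> fv e \<Longrightarrow> \<sigma> u = \<tau> u) \<Longrightarrow> ssubst \<sigma> e = ssubst \<tau> e"
proof (induction e arbitrary: \<sigma> \<tau>)
  case (Mu w e)
  have A: "(\<Union>u\<in>fv (Mu w e). fv (\<sigma> u)) = (\<Union>u\<in>fv (Mu w e). fv (\<tau> u))"
    using Mu.prems by auto
  show ?case unfolding ssubst.simps A Let_def
    by (rule arg_cong[where f="Mu _"], rule Mu.IH) (use Mu.prems in auto)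
next
  case (Pre a e)
  show ?case using Pre.IH[of \<sigma> \<tau>] Pre.prems by simp
next
  case (Plus e f)
  show ?case using Plus.IH(1)[of \<sigma> \<tau>] Plus.IH(2)[of \<sigma> \<tau>] Plus.prems by simp
qed simp_all

lemma ssubst_Var: "ssubst Var e = e"
proof (induction e)
  case (Mu w e)
  have "(\<Union>u\<in>fv (Mu w e). fv (Var u :: 'a exp)) = fv (Mu w e)" by simp
  then have "fresh_for w (\<Union>u\<in>fv (Mu w e). fv (Var u :: 'a exp)) = w"
    unfolding fresh_for_def by simp
  then show ?case using Mu.IH by (simp add: Let_def)
qed auto

lemma ssubst_id: "(\<And>u. u \<in> fv e \<Longrightarrow> \<sigma> u = Var u) \<Longrightarrow> ssubst \<sigma> e = e"
  using ssubst_cong[of e \<sigma> Var] ssubst_Var by metis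

lemma fv_ssubst: "fv (ssubst \<sigma> e) = (\<Union>u\<in>fv e. fv (\<sigma> u))"
proof (induction e arbitrary: \<sigma>)
  case (Mu w e)
  define A where "A = (\<Union>u\<in>fv (Mu w e). fv (\<sigma> u))"
  define w' where "w' = fresh_for w A"
  have fin: "finite A" unfolding A_def by simp
  have w': "w' \<notin> A" unfolding w'_def using fresh_for_notin[OF fin] .
  have "fv (ssubst \<sigma> (Mu w e)) = fv (ssubst (\<sigma>(w := Var w')) e) - {w'}"
    by (simp add: Let_def A_def w'_def)
  also have "\<dots> = (\<Union>u\<in>fv e. fv ((\<sigma>(w := Var w')) u)) - {w'}" using Mu.IH by simp
  also have "\<dots> = (\<Union>u\<in>fv (Mu w e). fv (\<sigma> u))"
  proof (cases "w \<in> fv e")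
    case True
    have "(\<Union>u\<in>fv e. fv ((\<sigma>(w := Var w')) u)) = {w'} \<union> (\<Union>u\<in>fv e - {w}. fv (\<sigma> u))"
      using True by (auto split: if_splits)
    then show ?thesis using w' unfolding A_def by auto
  next
    case False
    have "(\<Union>u\<in>fv e. fv ((\<sigma>(w := Var w')) u)) = (\<Union>u\<in>fv e - {w}. fv (\<sigma> u))"
      using False by (auto split: if_splits)
    then show ?thesis using w' unfolding A_def by auto
  qed
  finally show ?case .
qed simp_all


inductive_simps out_Zero[simp]: "out Zero v"
inductive_simps out_Var[simp]: "out (Var w) v"
inductive_simps out_Pre[simp]: "out (Pre a e) v"
inductive_simps out_Plus[simp]: "out (Plus e f) v"
inductive_simps out_Mu[simp]: "out (Mu w e) v"
inductive_simps step_Zero[simp]: "step Zero a r"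
inductive_simps step_Var[simp]: "step (Var w) a r"
inductive_simps step_Pre[simp]: "step (Pre b e) a r"
inductive_simps step_Plus[simp]: "step (Plus e f) a r"
inductive_simps step_Mu[simp]: "step (Mu w e) a r"

lemma out_fv: "out e v \<Longrightarrow> v \<in> fv e"
  by (induction rule: out.induct) auto

lemma fvstep: "step e a e' \<Longrightarrow> fv e' \<subseteq> fv e"
proof (induction rule: step.induct)
  case (step_mu e a e' v)
  show ?case unfolding subst1_def fv_ssubst using step_mu.IH by (auto split: if_splits)
qed auto

lemma out_ssubst: "out (ssubst \<sigma> e) v \<longleftrightarrow> (\<exists>u. out e u \<and> out (\<sigma> u) v)"
proof (induction e arbitrary: \<sigma>)
  case (Mu w e)
  define A where "A = (\<Union>u\<in>fv (Mu w e). fv (\<sigma> u))"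
  define w' where "w' = fresh_for w A"
  have fin: "finite A" unfolding A_def by simp
  have w': "w' \<notin> A" unfolding w'_def using fresh_for_notin[OF fin] .
  have "out (ssubst \<sigma> (Mu w e)) v \<longleftrightarrow> out (ssubst (\<sigma>(w := Var w')) e) v \<and> v \<noteq> w'"
    by (simp add: Let_def A_def w'_def)
  also have "\<dots> \<longleftrightarrow> (\<exists>u. out (Mu w e) u \<and> out (\<sigma> u) v)"
  proof
    assume "out (ssubst (\<sigma>(w := Var w')) e) v \<and> v \<noteq> w'"
    then obtain u where u: "out e u" "out ((\<sigma>(w := Var w')) u) v" "v \<noteq> w'"
      using Mu.IH by blast
    then have "u \<noteq> w" by auto
    then show "\<exists>u. out (Mu w e) u \<and> out (\<sigma> u) v" using u by auto
  next
    assume "\<exists>u. out (Mu w e) u \<and> out (\<sigma> u) v"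
    then obtain u where u: "out e u" "u \<noteq> w" "out (\<sigma> u) v" by auto
    have "v \<in> fv (\<sigma> u)" using out_fv u(3) .
    moreover have "u \<in> fv (Mu w e)" using out_fv[OF u(1)] u(2) by simp
    ultimately have "v \<noteq> w'" using w' unfolding A_def by blast
    then show "out (ssubst (\<sigma>(w := Var w')) e) v \<and> v \<noteq> w'"
      using Mu.IH u by auto
  qed
  finally show ?case .
qed auto

lemma bwd2: "out s u \<Longrightarrow> step (\<sigma> u) a r \<Longrightarrow> step (ssubst \<sigma> s) a r"
proof (induction s arbitrary: \<sigma>)
  case (Mu w e)
  define A where "A = (\<Union>u\<in>fv (Mu w e). fv (\<sigma> u))"
  define w' where "w' = fresh_for w A"
  define E where "E = ssubst (\<sigma>(w := Var w')) e"
  have fin: "finite A" unfolding A_def by simp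
  have w': "w' \<notin> A" unfolding w'_def using fresh_for_notin[OF fin] .
  have eq: "ssubst \<sigma> (Mu w e) = Mu w' E" by (simp add: Let_def A_def w'_def E_def)
  have uw: "u \<noteq> w" "out e u" using Mu.prems(1) by simp_all
  have st: "step ((\<sigma>(w := Var w')) u) a r" using uw Mu.prems(2) by simp
  have sE: "step E a r" unfolding E_def using Mu.IH[where \<sigma>="\<sigma>(w := Var w')", OF uw(2) st] .
  have fr: "fv r \<subseteq> fv (\<sigma> u)" using fvstep[OF Mu.prems(2)] .
  have uin: "u \<in> fv (Mu w e)" using uw out_fv[OF Mu.prems(1)] by simp
  have "w' \<notin> fv (\<sigma> u)" using w' uin unfolding A_def by blast
  then have nr: "w' \<notin> fv r" using fr by blast
  have "subst1 r (Mu w' E) w' = r" unfolding subst1_def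
    by (rule ssubst_id) (use nr in auto)
  moreover have "step (Mu w' E) a (subst1 r (Mu w' E) w')" using sE by (rule step_mu)
  ultimately show ?case unfolding eq by simp
next
  case (Var v)
  then show ?case by simp
next
  case (Pre b e)
  then show ?case by simp
next
  case (Plus e f)
  from Plus.prems(1) have "out e u \<or> out f u" by simp
  then show ?case
  proof
    assume "out e u"
    from Plus.IH(1)[where \<sigma>=\<sigma>, OF this Plus.prems(2)] show ?case by (simp add: step_plusL)
  next
    assume "out f u"
    from Plus.IH(2)[where \<sigma>=\<sigma>, OF this Plus.prems(2)] show ?case by (simp add: step_plusR)
  qed
qed simp


lemma ssubst_Mu_eq:
  "ssubst \<sigma> (Mu w e) = Mu (fresh_for w (\<Union>u\<in>fv (Mu w e). fv (\<sigma> u)))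
     (ssubst (\<sigma>(w := Var (fresh_for w (\<Union>u\<in>fv (Mu w e). fv (\<sigma> u))))) e)"
  by (simp add: Let_def)

lemma fresh_Mu:
  "u \<in> fv (Mu w e) \<Longrightarrow> fresh_for w (\<Union>u\<in>fv (Mu w e). fv (\<sigma> u)) \<notin> fv (\<sigma> u)"
  using fresh_for_notin[of "\<Union>u\<in>fv (Mu w e). fv (\<sigma> u)" w] by auto

fun es :: "nat \<Rightarrow> 'a exp \<Rightarrow> 'a exp \<Rightarrow> bool" where
  "es 0 s t = True"
| "es (Suc k) s t =
     ((\<forall>v. out s v \<longleftrightarrow> out t v)
    \<and> (\<forall>a s'. step s a s' \<longrightarrow> (\<exists>t'. step t a t' \<and> es k s' t'))
    \<and> (\<forall>a t'. step t a t' \<longrightarrow> (\<exists>s'. step s a s' \<and> es k s' t')))"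

lemma es_refl: "es k s s"
  by (induction k arbitrary: s) auto

lemma es_sym: "es k s t \<Longrightarrow> es k t s"
proof (induction k arbitrary: s t)
  case (Suc k)
  then show ?case by simp blast
qed simp

lemma es_trans: "es k s t \<Longrightarrow> es k t r \<Longrightarrow> es k s r"
proof (induction k arbitrary: s t r)
  case (Suc k)
  have o: "\<forall>v. out s v \<longleftrightarrow> out r v" using Suc.prems by simp
  have f: "\<forall>a s'. step s a s' \<longrightarrow> (\<exists>r'. step r a r' \<and> es k s' r')"
  proof (intro allI impI)
    fix a s' assume "step s a s'"
    then obtain t' where "step t a t'" "es k s' t'" using Suc.prems(1) \<open>step s a s'\<close> unfolding es.simps by blast
    then obtain r' where "step r a r'" "es k t' r'" using Suc.prems(2) \<open>step t a t'\<close> unfolding es.simps by blast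
    then show "\<exists>r'. step r a r' \<and> es k s' r'" using Suc.IH \<open>es k s' t'\<close> by blast
  qed
  have b: "\<forall>a r'. step r a r' \<longrightarrow> (\<exists>s'. step s a s' \<and> es k s' r')"
  proof (intro allI impI)
    fix a r' assume "step r a r'"
    then obtain t' where "step t a t'" "es k t' r'" using Suc.prems(2) \<open>step r a r'\<close> unfolding es.simps by blast
    then obtain s' where "step s a s'" "es k s' t'" using Suc.prems(1) \<open>step t a t'\<close> unfolding es.simps by blast
    then show "\<exists>s'. step s a s' \<and> es k s' r'" using Suc.IH \<open>es k t' r'\<close> by blast
  qed
  show ?case using o f b by simp
qed simp

lemma es_down: "es (Suc k) s t \<Longrightarrow> es k s t"
proof (induction k arbitrary: s t)
  case (Suc k)
  show ?case
  proof -
    have o: "\<forall>v. out s v \<longleftrightarrow> out t v" using Suc.prems by simp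
    have f: "\<forall>a s'. step s a s' \<longrightarrow> (\<exists>t'. step t a t' \<and> es k s' t')"
      using Suc.prems Suc.IH by (metis es.simps(2))
    have b: "\<forall>a t'. step t a t' \<longrightarrow> (\<exists>s'. step s a s' \<and> es k s' t')"
      using Suc.prems Suc.IH by (metis es.simps(2))
    show ?thesis using o f b by simp
  qed
qed simp

definition SL :: "nat \<Rightarrow> 'a itself \<Rightarrow> bool" where
  "SL k (T::'a itself) \<longleftrightarrow> (\<forall>(s::'a exp) t \<sigma> \<tau>. es k s t \<longrightarrow> (\<forall>u. es k (\<sigma> u) (\<tau> u))
      \<longrightarrow> es k (ssubst \<sigma> s) (ssubst \<tau> t))"

definition CP :: "nat \<Rightarrow> 'a itself \<Rightarrow> bool" where
  "CP k (T::'a itself) \<longleftrightarrow> (\<forall>\<sigma> \<tau> (e::'a exp).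
      es k (ssubst \<tau> (ssubst \<sigma> e)) (ssubst (\<lambda>u. ssubst \<tau> (\<sigma> u)) e))"

lemma mu_key:
  fixes \<sigma> :: "nat \<Rightarrow> 'a exp"
  assumes ml: "SL k TYPE('a)" and cp: "CP k TYPE('a)"
    and w'def: "w' = fresh_for w (\<Union>u\<in>fv (Mu w e). fv (\<sigma> u))"
    and Edef: "E = ssubst (\<sigma>(w := Var w')) e"
    and r0: "es k r0 (ssubst (\<sigma>(w := Var w')) e0)" and fv0: "fv e0 \<subseteq> fv e"
  shows "es k (subst1 r0 (Mu w' E) w') (ssubst \<sigma> (subst1 e0 (Mu w e) w))"
proof -
  define M' where "M' = Mu w' E"
  define \<sigma>' where "\<sigma>' = \<sigma>(w := Var w')"
  have Meq: "ssubst \<sigma> (Mu w e) = M'" unfolding M'_def Edef w'def by (simp add: Let_def)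
  have h1: "es k (subst1 r0 M' w') (subst1 (ssubst \<sigma>' e0) M' w')"
    using ml r0 es_refl unfolding SL_def subst1_def \<sigma>'_def by blast
  have h2: "es k (subst1 (ssubst \<sigma>' e0) M' w') (ssubst (\<lambda>u. subst1 (\<sigma>' u) M' w') e0)"
    using cp unfolding CP_def subst1_def by blast
  have h3: "ssubst (\<lambda>u. subst1 (\<sigma>' u) M' w') e0 = ssubst (\<sigma>(w:=M')) e0"
  proof (rule ssubst_cong)
    fix u assume u: "u \<in> fv e0"
    show "subst1 (\<sigma>' u) M' w' = (\<sigma>(w := M')) u"
    proof (cases "u = w")
      case True
      then show ?thesis unfolding \<sigma>'_def subst1_def by simp
    next
      case False
      then have "u \<in> fv (Mu w e)" using u fv0 by auto
      then have "w' \<notin> fv (\<sigma> u)" using fresh_Mu w'def by metis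
      then have "subst1 (\<sigma> u) M' w' = \<sigma> u" unfolding subst1_def
        by (intro ssubst_id) auto
      then show ?thesis using False unfolding \<sigma>'_def by simp
    qed
  qed
  have h4: "es k (ssubst \<sigma> (subst1 e0 (Mu w e) w)) (ssubst (\<lambda>u. ssubst \<sigma> ((Var(w := Mu w e)) u)) e0)"
    using cp unfolding CP_def subst1_def by blast
  have h5: "(\<lambda>u. ssubst \<sigma> ((Var(w := Mu w e)) u)) = \<sigma>(w:=M')"
    using Meq by (auto simp: fun_eq_iff)
  show ?thesis
    using h1 h2 h3 h4 h5 es_trans es_sym unfolding M'_def[symmetric] \<sigma>'_def[symmetric]
    by metis
qed


lemma char_fwd:
  fixes \<sigma> :: "nat \<Rightarrow> 'a exp"
  assumes ml: "SL k TYPE('a)" and cp: "CP k TYPE('a)"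
  shows "step (ssubst \<sigma> s) a r \<Longrightarrow>
    (\<exists>s'. step s a s' \<and> es k r (ssubst \<sigma> s')) \<or> (\<exists>u. out s u \<and> step (\<sigma> u) a r)"
proof (induction s arbitrary: \<sigma> r)
  case Zero
  then show ?case by (auto elim: step.cases)
next
  case (Var v)
  then show ?case by (metis out.out_var ssubst.simps(2))
next
  case (Pre b e)
  then have "a = b" "r = ssubst \<sigma> e" by simp_all
  then show ?case using es_refl by (metis step_pre)
next
  case (Plus e f)
  from Plus.prems have "step (ssubst \<sigma> e) a r \<or> step (ssubst \<sigma> f) a r" by simp
  then show ?case
  proof
    assume "step (ssubst \<sigma> e) a r"
    from Plus.IH(1)[OF this] show ?case by (meson out_plusL step_plusL)
  next
    assume "step (ssubst \<sigma> f) a r"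
    from Plus.IH(2)[OF this] show ?case by (meson out_plusR step_plusR)
  qed
next
  case (Mu w e)
  define w' where "w' = fresh_for w (\<Union>u\<in>fv (Mu w e). fv (\<sigma> u))"
  define E where "E = ssubst (\<sigma>(w := Var w')) e"
  have eq: "ssubst \<sigma> (Mu w e) = Mu w' E" unfolding w'_def E_def by (simp add: Let_def)
  obtain r0 where r0: "step E a r0" "r = subst1 r0 (Mu w' E) w'"
    using Mu.prems unfolding eq by auto
  from Mu.IH[OF r0(1)[unfolded E_def]]
  have "(\<exists>s'. step e a s' \<and> es k r0 (ssubst (\<sigma>(w := Var w')) s'))
        \<or> (\<exists>u. out e u \<and> step ((\<sigma>(w := Var w')) u) a r0)" .
  then show ?case
  proof
    assume "\<exists>s'. step e a s' \<and> es k r0 (ssubst (\<sigma>(w := Var w')) s')"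
    then obtain e0 where e0: "step e a e0" "es k r0 (ssubst (\<sigma>(w := Var w')) e0)" by blast
    have "es k r (ssubst \<sigma> (subst1 e0 (Mu w e) w))"
      unfolding r0(2) using mu_key[OF ml cp w'_def E_def e0(2) fvstep[OF e0(1)]] .
    moreover have "step (Mu w e) a (subst1 e0 (Mu w e) w)" by (rule step.step_mu[OF e0(1)])
    ultimately show ?case by blast
  next
    assume "\<exists>u. out e u \<and> step ((\<sigma>(w := Var w')) u) a r0"
    then obtain u where u: "out e u" "step ((\<sigma>(w := Var w')) u) a r0" by blast
    have uw: "u \<noteq> w" using u(2) by (cases "u = w") auto
    then have st: "step (\<sigma> u) a r0" using u by simp
    have "u \<in> fv (Mu w e)" using uw out_fv[OF u(1)] by simp
    then have "w' \<notin> fv (\<sigma> u)" using fresh_Mu w'_def by metis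
    then have "w' \<notin> fv r0" using fvstep[OF st] by blast
    then have "r = r0" unfolding r0(2) subst1_def by (intro ssubst_id) auto
    then show ?case using st uw u(1) by (metis out_mu)
  qed
qed

lemma char_bwd:
  fixes \<sigma> :: "nat \<Rightarrow> 'a exp"
  assumes ml: "SL k TYPE('a)" and cp: "CP k TYPE('a)"
  shows "step s a s' \<Longrightarrow> \<exists>r. step (ssubst \<sigma> s) a r \<and> es k r (ssubst \<sigma> s')"
proof (induction s a s' arbitrary: \<sigma> rule: step.induct)
  case (step_pre a e)
  then show ?case using es_refl by (metis ssubst.simps(3) step.step_pre)
next
  case (step_plusL e a e' f)
  then show ?case by (metis ssubst.simps(4) step.step_plusL)
next
  case (step_plusR f a f' e)
  then show ?case by (metis ssubst.simps(4) step.step_plusR)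
next
  case (step_mu e a e0 w)
  define w' where "w' = fresh_for w (\<Union>u\<in>fv (Mu w e). fv (\<sigma> u))"
  define E where "E = ssubst (\<sigma>(w := Var w')) e"
  have eq: "ssubst \<sigma> (Mu w e) = Mu w' E" unfolding w'_def E_def by (simp add: Let_def)
  obtain r0 where r0: "step E a r0" "es k r0 (ssubst (\<sigma>(w := Var w')) e0)"
    using step_mu.IH[of "\<sigma>(w := Var w')"] unfolding E_def by blast
  have "es k (subst1 r0 (Mu w' E) w') (ssubst \<sigma> (subst1 e0 (Mu w e) w))"
    using mu_key[OF ml cp w'_def E_def r0(2) fvstep[OF step_mu.hyps(1)]] .
  moreover have "step (ssubst \<sigma> (Mu w e)) a (subst1 r0 (Mu w' E) w')"
    unfolding eq using r0(1) by (rule step.step_mu)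
  ultimately show ?case by blast
qed


lemma es_SucI:
  assumes "\<forall>v. out s v \<longleftrightarrow> out t v"
    and "\<And>a s'. step s a s' \<Longrightarrow> \<exists>t'. step t a t' \<and> es k s' t'"
    and "\<And>a t'. step t a t' \<Longrightarrow> \<exists>s'. step s a s' \<and> es k s' t'"
  shows "es (Suc k) s t"
  using assms by simp

lemma es_SucD:
  assumes "es (Suc k) s t"
  shows "out s v \<longleftrightarrow> out t v"
    and "step s a s' \<Longrightarrow> \<exists>t'. step t a t' \<and> es k s' t'"
    and "step t a t' \<Longrightarrow> \<exists>s'. step s a s' \<and> es k s' t'"
  using assms by simp_all

lemma SL_half:
  fixes \<sigma> \<tau> :: "nat \<Rightarrow> 'a exp"
  assumes ml: "SL k TYPE('a)" and cp: "CP k TYPE('a)"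
    and st: "es (Suc k) s t" and pw: "\<And>u. es (Suc k) (\<sigma> u) (\<tau> u)"
    and r: "step (ssubst \<sigma> s) a r"
  shows "\<exists>r2. step (ssubst \<tau> t) a r2 \<and> es k r r2"
proof -
  from char_fwd[OF ml cp r]
  show ?thesis
  proof
    assume "\<exists>s'. step s a s' \<and> es k r (ssubst \<sigma> s')"
    then obtain s' where s': "step s a s'" "es k r (ssubst \<sigma> s')" by blast
    obtain t' where t': "step t a t'" "es k s' t'" using es_SucD(2)[OF st s'(1)] by blast
    have pwk: "\<forall>u. es k (\<sigma> u) (\<tau> u)" using pw es_down by blast
    have h: "es k (ssubst \<sigma> s') (ssubst \<tau> t')" using ml t'(2) pwk unfolding SL_def by blast
    obtain r2 where r2: "step (ssubst \<tau> t) a r2" "es k r2 (ssubst \<tau> t')"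
      using char_bwd[OF ml cp t'(1)] by blast
    have "es k r r2" using es_trans[OF es_trans[OF s'(2) h] es_sym[OF r2(2)]] .
    then show ?thesis using r2(1) by blast
  next
    assume "\<exists>u. out s u \<and> step (\<sigma> u) a r"
    then obtain u where u: "out s u" "step (\<sigma> u) a r" by blast
    have ot: "out t u" using es_SucD(1)[OF st] u(1) by blast
    obtain r2 where r2: "step (\<tau> u) a r2" "es k r r2" using es_SucD(2)[OF pw u(2)] by blast
    have "step (ssubst \<tau> t) a r2" using bwd2[where \<sigma>=\<tau>, OF ot r2(1)] .
    then show ?thesis using r2(2) by blast
  qed
qed

lemma SL_Suc:
  assumes ml: "SL k TYPE('a)" and cp: "CP k TYPE('a)"
  shows "SL (Suc k) TYPE('a)"
  unfolding SL_def
proof (intro allI impI)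
  fix s t :: "'a exp" and \<sigma> \<tau> :: "nat \<Rightarrow> 'a exp"
  assume st: "es (Suc k) s t" and pw: "\<forall>u. es (Suc k) (\<sigma> u) (\<tau> u)"
  have pw': "\<And>u. es (Suc k) (\<sigma> u) (\<tau> u)" using pw by blast
  have ts: "es (Suc k) t s" using es_sym[OF st] .
  have pw2: "\<And>u. es (Suc k) (\<tau> u) (\<sigma> u)" using es_sym pw by blast
  show "es (Suc k) (ssubst \<sigma> s) (ssubst \<tau> t)"
  proof (rule es_SucI)
    show "\<forall>v. out (ssubst \<sigma> s) v \<longleftrightarrow> out (ssubst \<tau> t) v"
      unfolding out_ssubst using es_SucD(1)[OF st] es_SucD(1)[OF pw'] by blast
  next
    fix a r assume "step (ssubst \<sigma> s) a r"
    from SL_half[OF ml cp st pw' this] show "\<exists>t'. step (ssubst \<tau> t) a t' \<and> es k r t'" .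
  next
    fix a r assume "step (ssubst \<tau> t) a r"
    from SL_half[OF ml cp ts pw2 this] obtain r2 where "step (ssubst \<sigma> s) a r2" "es k r r2" by blast
    then show "\<exists>s'. step (ssubst \<sigma> s) a s' \<and> es k s' r" using es_sym by blast
  qed
qed


lemma CP_Suc:
  assumes ml: "SL k TYPE('a)" and cp: "CP k TYPE('a)"
  shows "CP (Suc k) TYPE('a)"
  unfolding CP_def
proof (intro allI)
  fix \<sigma> \<tau> :: "nat \<Rightarrow> 'a exp" and e :: "'a exp"
  define \<rho> where "\<rho> = (\<lambda>u. ssubst \<tau> (\<sigma> u))"
  have SLk: "\<And>p q. es k p q \<Longrightarrow> es k (ssubst \<tau> p) (ssubst \<tau> q)"
    using ml es_refl unfolding SL_def by blast
  have CPk: "\<And>e'. es k (ssubst \<tau> (ssubst \<sigma> e')) (ssubst \<rho> e')"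
    using cp unfolding CP_def \<rho>_def by blast
  have "es (Suc k) (ssubst \<tau> (ssubst \<sigma> e)) (ssubst \<rho> e)"
  proof (rule es_SucI)
    show "\<forall>v. out (ssubst \<tau> (ssubst \<sigma> e)) v \<longleftrightarrow> out (ssubst \<rho> e) v"
      unfolding out_ssubst \<rho>_def by blast
  next
    fix a r assume r: "step (ssubst \<tau> (ssubst \<sigma> e)) a r"
    from char_fwd[OF ml cp r]
    show "\<exists>t'. step (ssubst \<rho> e) a t' \<and> es k r t'"
    proof
      assume "\<exists>s'. step (ssubst \<sigma> e) a s' \<and> es k r (ssubst \<tau> s')"
      then obtain p where p: "step (ssubst \<sigma> e) a p" "es k r (ssubst \<tau> p)" by blast
      from char_fwd[OF ml cp p(1)]
      show ?thesis
      proof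
        assume "\<exists>s'. step e a s' \<and> es k p (ssubst \<sigma> s')"
        then obtain e' where e': "step e a e'" "es k p (ssubst \<sigma> e')" by blast
        obtain r2 where r2: "step (ssubst \<rho> e) a r2" "es k r2 (ssubst \<rho> e')"
          using char_bwd[OF ml cp e'(1), of \<rho>] by blast
        have "es k r r2"
          using es_trans[OF es_trans[OF es_trans[OF p(2) SLk[OF e'(2)]] CPk[of e']] es_sym[OF r2(2)]] .
        then show ?thesis using r2(1) by blast
      next
        assume "\<exists>u. out e u \<and> step (\<sigma> u) a p"
        then obtain u where u: "out e u" "step (\<sigma> u) a p" by blast
        obtain r2 where r2: "step (ssubst \<tau> (\<sigma> u)) a r2" "es k r2 (ssubst \<tau> p)"
          using char_bwd[OF ml cp u(2), of \<tau>] by blast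
        have "step (\<rho> u) a r2" using r2(1) unfolding \<rho>_def by simp
        then have "step (ssubst \<rho> e) a r2" using bwd2[where \<sigma>=\<rho>, OF u(1)] by blast
        moreover have "es k r r2" using es_trans[OF p(2) es_sym[OF r2(2)]] .
        ultimately show ?thesis by blast
      qed
    next
      assume "\<exists>u. out (ssubst \<sigma> e) u \<and> step (\<tau> u) a r"
      then obtain u' where u': "out (ssubst \<sigma> e) u'" "step (\<tau> u') a r" by blast
      then obtain u where u: "out e u" "out (\<sigma> u) u'" unfolding out_ssubst by blast
      have "step (ssubst \<tau> (\<sigma> u)) a r" using bwd2[where \<sigma>=\<tau>, OF u(2) u'(2)] .
      then have "step (\<rho> u) a r" unfolding \<rho>_def by simp
      then have "step (ssubst \<rho> e) a r" using bwd2[where \<sigma>=\<rho>, OF u(1)] by blast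
      then show ?thesis using es_refl by blast
    qed
  next
    fix a r assume r: "step (ssubst \<rho> e) a r"
    from char_fwd[OF ml cp r]
    show "\<exists>s'. step (ssubst \<tau> (ssubst \<sigma> e)) a s' \<and> es k s' r"
    proof
      assume "\<exists>s'. step e a s' \<and> es k r (ssubst \<rho> s')"
      then obtain e' where e': "step e a e'" "es k r (ssubst \<rho> e')" by blast
      obtain p where p: "step (ssubst \<sigma> e) a p" "es k p (ssubst \<sigma> e')"
        using char_bwd[OF ml cp e'(1), of \<sigma>] by blast
      obtain r2 where r2: "step (ssubst \<tau> (ssubst \<sigma> e)) a r2" "es k r2 (ssubst \<tau> p)"
        using char_bwd[OF ml cp p(1), of \<tau>] by blast
      have "es k r2 r"
        using es_trans[OF es_trans[OF es_trans[OF r2(2) SLk[OF p(2)]] CPk[of e']] es_sym[OF e'(2)]] .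
      then show ?thesis using r2(1) by blast
    next
      assume "\<exists>u. out e u \<and> step (\<rho> u) a r"
      then obtain u where u: "out e u" "step (\<rho> u) a r" by blast
      then have su: "step (ssubst \<tau> (\<sigma> u)) a r" unfolding \<rho>_def by simp
      from char_fwd[OF ml cp su]
      show ?thesis
      proof
        assume "\<exists>s'. step (\<sigma> u) a s' \<and> es k r (ssubst \<tau> s')"
        then obtain p where p: "step (\<sigma> u) a p" "es k r (ssubst \<tau> p)" by blast
        have "step (ssubst \<sigma> e) a p" using bwd2[where \<sigma>=\<sigma>, OF u(1) p(1)] .
        then obtain r2 where r2: "step (ssubst \<tau> (ssubst \<sigma> e)) a r2" "es k r2 (ssubst \<tau> p)"
          using char_bwd[OF ml cp, of "ssubst \<sigma> e" a p \<tau>] by blast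
        have "es k r2 r" using es_trans[OF r2(2) es_sym[OF p(2)]] .
        then show ?thesis using r2(1) by blast
      next
        assume "\<exists>u'. out (\<sigma> u) u' \<and> step (\<tau> u') a r"
        then obtain u' where u': "out (\<sigma> u) u'" "step (\<tau> u') a r" by blast
        have "out (ssubst \<sigma> e) u'" unfolding out_ssubst using u(1) u'(1) by blast
        then have "step (ssubst \<tau> (ssubst \<sigma> e)) a r" using bwd2[where \<sigma>=\<tau>, OF _ u'(2)] by blast
        then show ?thesis using es_refl by blast
      qed
    qed
  qed
  then show "es (Suc k) (ssubst \<tau> (ssubst \<sigma> e)) (ssubst (\<lambda>u. ssubst \<tau> (\<sigma> u)) e)"
    unfolding \<rho>_def .
qed

lemma SL_CP_all: "SL k TYPE('a) \<and> CP k TYPE('a)"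
proof (induction k)
  case 0
  then show ?case unfolding SL_def CP_def by simp
next
  case (Suc k)
  then show ?case using SL_Suc CP_Suc by blast
qed

lemma subst_es:
  "es k s t \<Longrightarrow> (\<And>u. es k (\<sigma> u) (\<tau> u)) \<Longrightarrow> es k (ssubst \<sigma> s) (ssubst \<tau> t)"
  using SL_CP_all[of k] unfolding SL_def by blast

lemma mu_es: "es n e1 f1 \<Longrightarrow> es n (Mu x e1) (Mu x f1)"
proof (induction n arbitrary: e1 f1)
  case 0
  then show ?case by simp
next
  case (Suc k)
  have ih: "es k (Mu x e1) (Mu x f1)" using Suc.IH es_down[OF Suc.prems] .
  have pw: "\<And>u. es k ((Var(x := Mu x e1)) u) ((Var(x := Mu x f1)) u)"
    using ih by (simp add: es_refl)
  show ?case
  proof (rule es_SucI)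
    show "\<forall>v. out (Mu x e1) v \<longleftrightarrow> out (Mu x f1) v" using es_SucD(1)[OF Suc.prems] by simp
  next
    fix a r assume "step (Mu x e1) a r"
    then obtain e' where e': "step e1 a e'" "r = subst1 e' (Mu x e1) x" by auto
    obtain f' where f': "step f1 a f'" "es k e' f'" using es_SucD(2)[OF Suc.prems e'(1)] by blast
    have "step (Mu x f1) a (subst1 f' (Mu x f1) x)" by (rule step.step_mu[OF f'(1)])
    moreover have "es k r (subst1 f' (Mu x f1) x)" unfolding e'(2) subst1_def
      using subst_es[OF f'(2) pw] .
    ultimately show "\<exists>t'. step (Mu x f1) a t' \<and> es k r t'" by blast
  next
    fix a r assume "step (Mu x f1) a r"
    then obtain f' where f': "step f1 a f'" "r = subst1 f' (Mu x f1) x" by auto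
    obtain e' where e': "step e1 a e'" "es k e' f'" using es_SucD(3)[OF Suc.prems f'(1)] by blast
    have "step (Mu x e1) a (subst1 e' (Mu x e1) x)" by (rule step.step_mu[OF e'(1)])
    moreover have "es k (subst1 e' (Mu x e1) x) r" unfolding f'(2) subst1_def
      using subst_es[OF e'(2) pw] .
    ultimately show "\<exists>s'. step (Mu x e1) a s' \<and> es k s' r" by blast
  qed
qed


lemma bisim_es: "bisim s t \<Longrightarrow> es k s t"
proof -
  assume "bisim s t"
  then obtain R where R: "is_bisim R" "R s t" unfolding bisim_def by blast
  have "R p q \<Longrightarrow> es k p q" for p q
  proof (induction k arbitrary: p q)
    case (Suc k)
    have d: "(\<forall>v. out p v \<longleftrightarrow> out q v)
    \<and> (\<forall>a e'. step p a e' \<longrightarrow> (\<exists>f'. step q a f' \<and> R e' f'))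
    \<and> (\<forall>a f'. step q a f' \<longrightarrow> (\<exists>e'. step p a e' \<and> R e' f'))"
      using R(1) Suc.prems unfolding is_bisim_def by blast
    show ?case
    proof (rule es_SucI)
      show "\<forall>v. out p v \<longleftrightarrow> out q v" using d by blast
    next
      fix a p' assume "step p a p'"
      then obtain q' where "step q a q'" "R p' q'" using d by blast
      then show "\<exists>t'. step q a t' \<and> es k p' t'" using Suc.IH by blast
    next
      fix a q' assume "step q a q'"
      then obtain p' where "step p a p'" "R p' q'" using d by blast
      then show "\<exists>s'. step p a s' \<and> es k s' q'" using Suc.IH by blast
    qed
  qed simp
  then show ?thesis using R(2) .
qed

lemma bisim_refl: "bisim s s"
  unfolding bisim_def
proof (intro exI conjI)
  show "is_bisim (=)" unfolding is_bisim_def by blast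
qed simp

lemma ExpQ_class: "X \<in> ExpQ \<Longrightarrow> \<exists>c. X = {y. bisim c y}"
  unfolding ExpQ_def quotient_def bisim_rel_def by auto

lemma class_in: "{y. bisim c y} \<in> ExpQ"
  unfolding ExpQ_def quotient_def bisim_rel_def by auto

lemma class_es: "X \<in> ExpQ \<Longrightarrow> p \<in> X \<Longrightarrow> q \<in> X \<Longrightarrow> es k p q"
proof -
  assume "X \<in> ExpQ" "p \<in> X" "q \<in> X"
  then obtain c where c: "X = {y. bisim c y}" using ExpQ_class by blast
  then have "es k c p" "es k c q" using \<open>p \<in> X\<close> \<open>q \<in> X\<close> bisim_es by auto
  then show "es k p q" using es_sym es_trans by blast
qed

lemma L1: "X \<in> ExpQ \<Longrightarrow> Y \<in> ExpQ \<Longrightarrow> qstrat n X Y \<Longrightarrow> x \<in> X \<Longrightarrow> y \<in> Y \<Longrightarrow> es n x y"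
proof (induction n arbitrary: X Y x y)
  case 0
  then show ?case by simp
next
  case (Suc k)
  note q = Suc.prems(3)[unfolded qstrat.simps]
  show ?case
  proof (rule es_SucI)
    show "\<forall>v. out x v \<longleftrightarrow> out y v"
    proof
      fix v
      have "qout X v \<longleftrightarrow> qout Y v" using q by blast
      moreover have "qout X v \<longleftrightarrow> out x v" unfolding qout_def
      proof
        assume "\<exists>z\<in>X. out z v"
        then obtain z where z: "z \<in> X" "out z v" by blast
        then show "out x v" using es_SucD(1)[OF class_es[OF Suc.prems(1) z(1) Suc.prems(4)]] by blast
      next
        assume "out x v" then show "\<exists>z\<in>X. out z v" using Suc.prems(4) by blast
      qed
      moreover have "qout Y v \<longleftrightarrow> out y v" unfolding qout_def
      proof
        assume "\<exists>z\<in>Y. out z v"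
        then obtain z where z: "z \<in> Y" "out z v" by blast
        then show "out y v" using es_SucD(1)[OF class_es[OF Suc.prems(2) z(1) Suc.prems(5)]] by blast
      next
        assume "out y v" then show "\<exists>z\<in>Y. out z v" using Suc.prems(5) by blast
      qed
      ultimately show "out x v \<longleftrightarrow> out y v" by blast
    qed
  next
    fix a x' assume xs: "step x a x'"
    define X' where "X' = {z. bisim x' z}"
    have X'Q: "X' \<in> ExpQ" unfolding X'_def by (rule class_in)
    have x'X': "x' \<in> X'" unfolding X'_def using bisim_refl by blast
    have "qstep X a X'" unfolding qstep_def using Suc.prems(4) x'X' xs by blast
    then obtain Y' where Y': "Y' \<in> ExpQ" "qstep Y a Y'" "qstrat k X' Y'" using q X'Q by blast
    then obtain y0 y'' where y0: "y0 \<in> Y" "y'' \<in> Y'" "step y0 a y''" unfolding qstep_def by blast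
    have "es (Suc k) y0 y" using class_es[OF Suc.prems(2) y0(1) Suc.prems(5)] .
    then obtain y' where y': "step y a y'" "es k y'' y'" using es_SucD(2)[OF _ y0(3)] by blast
    have "es k x' y''" using Suc.IH[OF X'Q Y'(1) Y'(3) x'X' y0(2)] .
    then have "es k x' y'" using es_trans[OF _ y'(2)] by blast
    then show "\<exists>t'. step y a t' \<and> es k x' t'" using y'(1) by blast
  next
    fix a y' assume ys: "step y a y'"
    define Y' where "Y' = {z. bisim y' z}"
    have Y'Q: "Y' \<in> ExpQ" unfolding Y'_def by (rule class_in)
    have y'Y': "y' \<in> Y'" unfolding Y'_def using bisim_refl by blast
    have "qstep Y a Y'" unfolding qstep_def using Suc.prems(5) y'Y' ys by blast
    then obtain X' where X': "X' \<in> ExpQ" "qstep X a X'" "qstrat k X' Y'" using q Y'Q by blast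
    then obtain x0 x'' where x0: "x0 \<in> X" "x'' \<in> X'" "step x0 a x''" unfolding qstep_def by blast
    have "es (Suc k) x0 x" using class_es[OF Suc.prems(1) x0(1) Suc.prems(4)] .
    then obtain x' where x': "step x a x'" "es k x'' x'" using es_SucD(2)[OF _ x0(3)] by blast
    have "es k x'' y'" using Suc.IH[OF X'(1) Y'Q X'(3) x0(2) y'Y'] .
    then have "es k x' y'" using es_trans[OF es_sym[OF x'(2)]] by blast
    then show "\<exists>s'. step x a s' \<and> es k s' y'" using x'(1) by blast
  qed
qed

lemma L2: "X \<noteq> {} \<Longrightarrow> Y \<noteq> {} \<Longrightarrow> (\<forall>x\<in>X. \<forall>y\<in>Y. es n x y) \<Longrightarrow> qstrat n X Y"
proof (induction n arbitrary: X Y)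
  case 0
  then show ?case by simp
next
  case (Suc k)
  obtain x1 where x1: "x1 \<in> X" using Suc.prems(1) by blast
  obtain y1 where y1: "y1 \<in> Y" using Suc.prems(2) by blast
  have o: "\<forall>v. qout X v \<longleftrightarrow> qout Y v"
  proof
    fix v
    have "qout X v \<longleftrightarrow> out y1 v" unfolding qout_def
    proof
      assume "\<exists>z\<in>X. out z v"
      then obtain z where z: "z \<in> X" "out z v" by blast
      have "es (Suc k) z y1" using Suc.prems(3) z(1) y1 by blast
      then show "out y1 v" using es_SucD(1) z(2) by blast
    next
      assume "out y1 v"
      have "es (Suc k) x1 y1" using Suc.prems(3) x1 y1 by blast
      then show "\<exists>z\<in>X. out z v" using es_SucD(1) x1 \<open>out y1 v\<close> by blast
    qed
    moreover have "qout Y v \<longleftrightarrow> out x1 v" unfolding qout_def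
    proof
      assume "\<exists>z\<in>Y. out z v"
      then obtain z where z: "z \<in> Y" "out z v" by blast
      have "es (Suc k) x1 z" using Suc.prems(3) z(1) x1 by blast
      then show "out x1 v" using es_SucD(1) z(2) by blast
    next
      assume "out x1 v"
      have "es (Suc k) x1 y1" using Suc.prems(3) x1 y1 by blast
      then show "\<exists>z\<in>Y. out z v" using es_SucD(1) y1 \<open>out x1 v\<close> by blast
    qed
    moreover have "out x1 v \<longleftrightarrow> out y1 v"
      using es_SucD(1)[of k x1 y1] Suc.prems(3) x1 y1 by blast
    ultimately show "qout X v \<longleftrightarrow> qout Y v" by blast
  qed
  have f: "\<forall>a X'. X' \<in> ExpQ \<longrightarrow> qstep X a X' \<longrightarrow> (\<exists>Y'\<in>ExpQ. qstep Y a Y' \<and> qstrat k X' Y')"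
  proof (intro allI impI)
    fix a X' assume X'Q: "X' \<in> ExpQ" and "qstep X a X'"
    then obtain x0 x' where x0: "x0 \<in> X" "x' \<in> X'" "step x0 a x'" unfolding qstep_def by blast
    have "es (Suc k) x0 y1" using Suc.prems(3) x0(1) y1 by blast
    then obtain y' where y': "step y1 a y'" "es k x' y'" using es_SucD(2)[OF _ x0(3)] by blast
    define Y' where "Y' = {z. bisim y' z}"
    have Y'Q: "Y' \<in> ExpQ" unfolding Y'_def by (rule class_in)
    have y'Y': "y' \<in> Y'" unfolding Y'_def using bisim_refl by blast
    have "qstep Y a Y'" unfolding qstep_def using y1 y'Y' y'(1) by blast
    moreover have "qstrat k X' Y'"
    proof (rule Suc.IH)
      show "X' \<noteq> {}" using x0(2) by blast
      show "Y' \<noteq> {}" using y'Y' by blast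
      show "\<forall>x\<in>X'. \<forall>y\<in>Y'. es k x y"
      proof (intro ballI)
        fix p q assume "p \<in> X'" "q \<in> Y'"
        have "es k p x'" using class_es[OF X'Q \<open>p \<in> X'\<close> x0(2)] .
        moreover have "es k y' q" using \<open>q \<in> Y'\<close> bisim_es unfolding Y'_def by blast
        ultimately show "es k p q" using es_trans[OF es_trans[OF _ y'(2)]] by blast
      qed
    qed
    ultimately show "\<exists>Y'\<in>ExpQ. qstep Y a Y' \<and> qstrat k X' Y'" using Y'Q by blast
  qed
  have b: "\<forall>a Y'. Y' \<in> ExpQ \<longrightarrow> qstep Y a Y' \<longrightarrow> (\<exists>X'\<in>ExpQ. qstep X a X' \<and> qstrat k X' Y')"
  proof (intro allI impI)
    fix a Y' assume Y'Q: "Y' \<in> ExpQ" and "qstep Y a Y'"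
    then obtain y0 y' where y0: "y0 \<in> Y" "y' \<in> Y'" "step y0 a y'" unfolding qstep_def by blast
    have "es (Suc k) x1 y0" using Suc.prems(3) x1 y0(1) by blast
    then obtain x' where x': "step x1 a x'" "es k x' y'" using es_SucD(3)[OF _ y0(3)] by blast
    define X' where "X' = {z. bisim x' z}"
    have X'Q: "X' \<in> ExpQ" unfolding X'_def by (rule class_in)
    have x'X': "x' \<in> X'" unfolding X'_def using bisim_refl by blast
    have "qstep X a X'" unfolding qstep_def using x1 x'X' x'(1) by blast
    moreover have "qstrat k X' Y'"
    proof (rule Suc.IH)
      show "X' \<noteq> {}" using x'X' by blast
      show "Y' \<noteq> {}" using y0(2) by blast
      show "\<forall>x\<in>X'. \<forall>y\<in>Y'. es k x y"
      proof (intro ballI)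
        fix p q assume "p \<in> X'" "q \<in> Y'"
        have "es k y' q" using class_es[OF Y'Q y0(2) \<open>q \<in> Y'\<close>] .
        moreover have xp: "es k x' p" using \<open>p \<in> X'\<close> bisim_es unfolding X'_def by blast
        ultimately show "es k p q" using es_trans[OF es_trans[OF es_sym[OF xp] x'(2)]] by blast
      qed
    qed
    ultimately show "\<exists>X'\<in>ExpQ. qstep X a X' \<and> qstrat k X' Y'" using X'Q by blast
  qed
  show ?case using o f b by simp
qed

theorem mainTheorem13:
  fixes e f :: "'a exp set" and x :: nat and n :: nat
  assumes "e \<in> ExpQ" and "f \<in> ExpQ"
    and "qstrat n e f"
  shows "qstrat n (qmu x e) (qmu x f)"
proof (rule L2)
  obtain c where c: "e = {y. bisim c y}" using ExpQ_class[OF assms(1)] by blast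
  obtain d where d: "f = {y. bisim d y}" using ExpQ_class[OF assms(2)] by blast
  have "Mu x c \<in> qmu x e" unfolding qmu_def c using bisim_refl by blast
  then show "qmu x e \<noteq> {}" by blast
  have "Mu x d \<in> qmu x f" unfolding qmu_def d using bisim_refl by blast
  then show "qmu x f \<noteq> {}" by blast
  show "\<forall>p\<in>qmu x e. \<forall>q\<in>qmu x f. es n p q"
  proof (intro ballI)
    fix p q assume "p \<in> qmu x e" "q \<in> qmu x f"
    then obtain e1 f1 where e1: "e1 \<in> e" "bisim p (Mu x e1)" and f1: "f1 \<in> f" "bisim q (Mu x f1)"
      unfolding qmu_def by blast
    have "es n e1 f1" using L1[OF assms e1(1) f1(1)] .
    then have "es n (Mu x e1) (Mu x f1)" by (rule mu_es)
    moreover have "es n p (Mu x e1)" using bisim_es[OF e1(2)] .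
    moreover have "es n (Mu x f1) q" using es_sym[OF bisim_es[OF f1(2)]] .
    ultimately show "es n p q" using es_trans by metis
  qed
qed

end
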